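(* Let $x\in\{0,1\}^\infty$ satisfy $\sigma^n(x)=x$ for some $n\ge1$, and let $X=\{\sigma^j(x):0\le j<n\}$ be its orbit. Then the hereditary closure $\tilde X$ of $X$ is a transitive sofic shift and \[\tilde X=\{y\in\{0,1\}^\infty: y\le\sigma^j(x)\text{ for some }0\le j<n\}.\] If moreover $\sigma(x)\ne x$, then $\tilde X$ is not topologically mixing.
   Context: On $\{0,1\}^\infty=\{0,1\}^{\mathbb N_0}$, $y\le x$ means $y_i\le x_i$ for all $i$. The hereditary closure of a shift space $X$ is $\tilde X=\{y\in\{0,1\}^\infty:\exists x\in X,\ y\le x\}$. A sofic shift is the set of label sequences of infinite paths in a finite edge-labelled directed graph. Transitive: for all words $u,w$ in the language there is $v$ with $uvw$ in the language; topologically mixing: for all $u,w$ there is $N$ such that for every $m\ge N$ some $v$ with $|v|=m$ has $uvw$ in the language. *)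

theory Defs
  imports Main
begin

text \<open>Points of {0,1}^N_0 are modelled as nat \<Rightarrow> bool (False = 0, True = 1).
  The pointwise order on functions gives y \<le> x iff y i \<le> x i for all i.\<close>

definition shift :: "(nat \<Rightarrow> bool) \<Rightarrow> (nat \<Rightarrow> bool)" where
  "shift x = (\<lambda>i. x (Suc i))"

definition hclosure :: "(nat \<Rightarrow> bool) set \<Rightarrow> (nat \<Rightarrow> bool) set" where
  "hclosure X = {y. \<exists>x\<in>X. \<forall>i. y i \<le> x i}"

definition language :: "(nat \<Rightarrow> bool) set \<Rightarrow> bool list set" where
  "language X = {w. \<exists>x\<in>X. \<exists>k. w = map x [k..<k + length w]}"

text \<open>Sofic: label sequences of infinite paths in a finite edge-labelled digraph
  (vertices taken from nat, edges (source, label, target)).\<close>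
definition sofic :: "(nat \<Rightarrow> bool) set \<Rightarrow> bool" where
  "sofic X \<longleftrightarrow> (\<exists>E :: (nat \<times> bool \<times> nat) set. finite E \<and>
      X = {y. \<exists>p :: nat \<Rightarrow> nat. \<forall>i. (p i, y i, p (Suc i)) \<in> E})"

definition transitive_shift :: "(nat \<Rightarrow> bool) set \<Rightarrow> bool" where
  "transitive_shift X \<longleftrightarrow> (\<forall>u\<in>language X. \<forall>w\<in>language X.
      \<exists>v. u @ v @ w \<in> language X)"

definition mixing_shift :: "(nat \<Rightarrow> bool) set \<Rightarrow> bool" where
  "mixing_shift X \<longleftrightarrow> (\<forall>u\<in>language X. \<forall>w\<in>language X.
      \<exists>N. \<forall>m\<ge>N. \<exists>v. length v = m \<and> u @ v @ w \<in> language X)"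

end

theory Submission
  imports Defs
begin

lemma shift_pow: "(shift ^^ j) x i = x (i + j)"
  by (induction j arbitrary: i) (auto simp: shift_def)

definition win :: "(nat \<Rightarrow> bool) \<Rightarrow> nat \<Rightarrow> bool list \<Rightarrow> bool" where
  "win x k w \<longleftrightarrow> (\<forall>t<length w. w ! t \<longrightarrow> x (k + t))"

locale per =
  fixes x :: "nat \<Rightarrow> bool" and n :: nat
  assumes n1: "n \<ge> 1" and pn: "\<And>i. x (i + n) = x i"
begin

lemma per_mult: "x (i + m * n) = x i"
proof (induction m)
  case (Suc m)
  have "x (i + Suc m * n) = x (i + m * n + n)" by (simp add: algebra_simps)
  also have "\<dots> = x (i + m * n)" by (rule pn)
  finally show ?case using Suc by simp
qed simp

lemma per_mod: "x i = x (i mod n)"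
  using per_mult[of "i mod n" "i div n"] by simp

lemma le_shift:
  assumes "\<forall>t<n. x t \<longrightarrow> x (k + t)"
  shows "x (t + k) = x t"
proof -
  have all: "x t \<longrightarrow> x (k + t)" for t
  proof
    assume "x t"
    hence "x (t mod n)" using per_mod by simp
    moreover have "t mod n < n" using n1 by simp
    ultimately have "x (k + t mod n)" using assms by blast
    hence "x ((k + t mod n) mod n)" using per_mod by simp
    moreover have "(k + t mod n) mod n = (k + t) mod n" by (simp add: mod_add_right_eq)
    ultimately show "x (k + t)" using per_mod[of "k+t"] by simp
  qed
  have chain: "x t \<longrightarrow> x (t + m * k)" for m t
  proof (induction m)
    case (Suc m)
    then show ?case using all[of "t + m*k"] by (simp add: algebra_simps)
  qed simp
  have "x (t + k) \<longrightarrow> x (t + k + (n - 1) * k)" by (rule chain)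
  moreover have "t + k + (n - 1) * k = t + k * n"
    using n1 by (cases n) (auto simp: algebra_simps)
  moreover have "x (t + k * n) = x t" by (rule per_mult)
  ultimately have "x (t + k) \<longrightarrow> x t" by metis
  thus ?thesis using all[of t] by (auto simp: add.commute)
qed

end

lemma per_intro:
  assumes "n \<ge> 1" "(shift ^^ n) x = x" shows "per x n"
proof
  fix i show "x (i + n) = x i" using fun_cong[OF assms(2), of i] by (simp add: shift_pow)
qed (rule assms(1))

lemma lang_char:
  assumes P: "per x n"
  shows "language (hclosure {(shift ^^ j) x | j. j < n}) = {w. \<exists>k. win x k w}"
proof (intro set_eqI iffI)
  fix w assume "w \<in> language (hclosure {(shift ^^ j) x | j. j < n})"
  then obtain y j k where y: "\<forall>i. y i \<le> x (i + j)" and w: "w = map y [k..<k + length w]"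
    unfolding language_def hclosure_def by (auto simp: shift_pow)
  have "win x (k + j) w" unfolding win_def
  proof (intro allI impI)
    fix t assume "t < length w" "w ! t"
    hence "y (k + t)" using w by (metis add_diff_cancel_left' length_map length_upt nth_map_upt)
    thus "x (k + j + t)" using y[rule_format, of "k+t"] by (simp add: algebra_simps)
  qed
  thus "w \<in> {w. \<exists>k. win x k w}" by blast
next
  fix w assume "w \<in> {w. \<exists>k. win x k w}"
  then obtain k where k: "win x k w" by blast
  define y where "y i = (k \<le> i \<and> i < k + length w \<and> w ! (i - k))" for i
  have "0 < n" using P per.n1 by fastforce
  have xin: "x \<in> {(shift ^^ j) x | j. j < n}"
    by (rule CollectI, rule exI[of _ 0]) (simp add: \<open>0<n\<close>)
  have yle: "\<forall>i. y i \<le> x i" using k unfolding win_def y_def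
      by (metis add_diff_inverse_nat le_boolI less_diff_conv2 not_le add.commute)
  have "y \<in> hclosure {(shift ^^ j) x | j. j < n}"
    unfolding hclosure_def using xin yle by blast
  moreover have "w = map y [k..<k + length w]"
    by (rule nth_equalityI) (auto simp: y_def)
  ultimately show "w \<in> language (hclosure {(shift ^^ j) x | j. j < n})"
    unfolding language_def by blast
qed

lemma trans_part:
  assumes P: "per x n"
  shows "transitive_shift (hclosure {(shift ^^ j) x | j. j < n})"
  unfolding transitive_shift_def lang_char[OF P]
proof (intro ballI)
  fix u w assume "u \<in> {w. \<exists>k. win x k w}" "w \<in> {w. \<exists>k. win x k w}"
  then obtain k1 k2 where k1: "win x k1 u" and k2: "win x k2 w" by blast
  define m where "m = k1 + length u"
  define K where "K = k2 + m * n"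
  have n1: "n \<ge> 1" using P per.n1 by blast
  have "m * n \<ge> m" using n1 by simp
  hence Kge: "K \<ge> k1 + length u" unfolding K_def m_def by linarith
  define v where "v = replicate (K - k1 - length u) False"
  have lv: "length u + length v = K - k1" using Kge unfolding v_def by simp
  have "win x k1 (u @ v @ w)" unfolding win_def
  proof (intro allI impI)
    fix t assume t: "t < length (u @ v @ w)" and h: "(u @ v @ w) ! t"
    show "x (k1 + t)"
    proof (cases "t < length u")
      case True
      then show ?thesis using h k1 by (auto simp: win_def nth_append)
    next
      case False
      show ?thesis
      proof (cases "t < length u + length v")
        case True
        then show ?thesis using h False by (auto simp: nth_append v_def split: if_splits)
      next
        case F2: False
        define s where "s = t - length u - length v"
        have ws: "w ! s" using h False F2 by (simp add: nth_append s_def split: if_splits)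
        have "s < length w" using t F2 by (simp add: s_def)
        hence "x (k2 + s)" using ws k2 by (simp add: win_def)
        hence "x (k2 + s + m * n)" using per.per_mult[OF P] by simp
        moreover have "k2 + s + m * n = k1 + t" using lv F2 Kge unfolding s_def K_def by linarith
        ultimately show ?thesis by simp
      qed
    qed
  qed
  thus "\<exists>v. u @ v @ w \<in> {w. \<exists>k. win x k w}" by blast
qed

lemma mix_part:
  assumes P: "per x n" and ne: "shift x \<noteq> x"
  shows "\<not> mixing_shift (hclosure {(shift ^^ j) x | j. j < n})"
proof
  assume "mixing_shift (hclosure {(shift ^^ j) x | j. j < n})"
  hence M: "\<forall>u\<in>{w. \<exists>k. win x k w}. \<forall>w\<in>{w. \<exists>k. win x k w}.
      \<exists>N. \<forall>m\<ge>N. \<exists>v. length v = m \<and> u @ v @ w \<in> {w. \<exists>k. win x k w}"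
    unfolding mixing_shift_def lang_char[OF P] .
  define u where "u = map x [0..<n]"
  have lu: "length u = n" by (simp add: u_def)
  have "win x 0 u" by (simp add: win_def u_def)
  hence uin: "u \<in> {w. \<exists>k. win x k w}" by blast
  then obtain N where N: "\<forall>m\<ge>N. \<exists>v. length v = m \<and> u @ v @ u \<in> {w. \<exists>k. win x k w}"
    using M by blast
  have key: "\<forall>t. x (t + (n + m)) = x t" if mN: "m \<ge> N" for m
  proof -
    obtain v k where v: "length v = m" and wk: "win x k (u @ v @ u)" using N[rule_format, OF mN] by auto
    have a: "\<forall>t<n. x t \<longrightarrow> x (k + t)"
    proof (intro allI impI)
      fix t assume "t < n" "x t"
      thus "x (k + t)" using wk[unfolded win_def, rule_format, of t] lu
        by (simp add: nth_append u_def)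
    qed
    have b: "\<forall>t<n. x t \<longrightarrow> x ((k + (n + m)) + t)"
    proof (intro allI impI)
      fix t assume "t < n" "x t"
      hence "(u @ v @ u) ! (n + m + t)" using lu v by (simp add: nth_append u_def)
      moreover have "n + m + t < length (u @ v @ u)" using lu v \<open>t<n\<close> by simp
      ultimately have "x (k + (n + m + t))" using wk by (simp add: win_def)
      thus "x ((k + (n + m)) + t)" by (simp add: algebra_simps)
    qed
    show ?thesis
    proof
      fix t
      have "x (t + (n + m) + k) = x (t + (n + m))" using per.le_shift[OF P a] .
      moreover have "x (t + (k + (n + m))) = x t" using per.le_shift[OF P b] .
      ultimately show "x (t + (n + m)) = x t" by (simp add: algebra_simps)
    qed
  qed
  have "shift x = x"
  proof
    fix t
    have "x (Suc t) = x (Suc t + (n + N))" using key[of N] by (metis order_refl)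
    also have "\<dots> = x (t + (n + Suc N))" by simp
    also have "\<dots> = x t" using key[of "Suc N"] by simp
    finally show "shift x t = x t" by (simp add: shift_def)
  qed
  with ne show False by simp
qed

lemma sofic_part:
  assumes P: "per x n"
  shows "sofic (hclosure {(shift ^^ j) x | j. j < n})"
proof -
  have n1: "n \<ge> 1" using P per.n1 by blast
  define E where "E = {(k, b, Suc k mod n) | k b. k < n \<and> (b \<longrightarrow> x k)}"
  have "E \<subseteq> {0..<n} \<times> UNIV \<times> {0..<n}" using n1 by (auto simp: E_def)
  hence fin: "finite E" by (rule finite_subset) auto
  have "hclosure {(shift ^^ j) x | j. j < n} = {y. \<exists>p :: nat \<Rightarrow> nat. \<forall>i. (p i, y i, p (Suc i)) \<in> E}"
  proof (intro set_eqI iffI)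
    fix y assume "y \<in> hclosure {(shift ^^ j) x | j. j < n}"
    then obtain j where j: "j < n" and y: "\<forall>i. y i \<le> x (i + j)"
      by (auto simp: hclosure_def shift_pow)
    have "\<forall>i. ((j + i) mod n, y i, (j + Suc i) mod n) \<in> E"
    proof
      fix i
      have "y i \<longrightarrow> x ((j + i) mod n)" using y per.per_mod[OF P, of "i + j"]
        by (auto simp: add.commute)
      moreover have "(j + Suc i) mod n = Suc ((j + i) mod n) mod n" by (simp add: mod_Suc_eq)
      moreover have "(j + i) mod n < n" using n1 by simp
      ultimately show "((j + i) mod n, y i, (j + Suc i) mod n) \<in> E" unfolding E_def by auto
    qed
    thus "y \<in> {y. \<exists>p :: nat \<Rightarrow> nat. \<forall>i. (p i, y i, p (Suc i)) \<in> E}"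
      by (intro CollectI exI[of _ "\<lambda>i. (j + i) mod n"]) simp
  next
    fix y assume "y \<in> {y. \<exists>p :: nat \<Rightarrow> nat. \<forall>i. (p i, y i, p (Suc i)) \<in> E}"
    then obtain p where p: "\<forall>i. (p i, y i, p (Suc i)) \<in> E" by blast
    have e: "p i < n \<and> p (Suc i) = Suc (p i) mod n \<and> (y i \<longrightarrow> x (p i))" for i
      using p[rule_format, of i] by (auto simp: E_def)
    have pi: "p i = (p 0 + i) mod n" for i
    proof (induction i)
      case 0 then show ?case using e[of 0] by simp
    next
      case (Suc i) then show ?case using e[of i] by (simp add: mod_Suc_eq)
    qed
    have "\<forall>i. y i \<le> (shift ^^ p 0) x i"
    proof
      fix i
      have "y i \<longrightarrow> x ((p 0 + i) mod n)" using e[of i] pi[of i] by simp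
      thus "y i \<le> (shift ^^ p 0) x i" using per.per_mod[OF P, of "p 0 + i"]
        by (auto simp: shift_pow add.commute)
    qed
    moreover have "p 0 < n" using e[of 0] by simp
    ultimately show "y \<in> hclosure {(shift ^^ j) x | j. j < n}"
      unfolding hclosure_def by blast
  qed
  thus ?thesis unfolding sofic_def using fin by blast
qed

theorem mainTheorem16:
  fixes x :: "nat \<Rightarrow> bool" and n :: nat
  assumes "n \<ge> 1" and "(shift ^^ n) x = x"
  shows "sofic (hclosure {(shift ^^ j) x | j. j < n})
    \<and> transitive_shift (hclosure {(shift ^^ j) x | j. j < n})
    \<and> hclosure {(shift ^^ j) x | j. j < n} = {y. \<exists>j<n. \<forall>i. y i \<le> (shift ^^ j) x i}
    \<and> (shift x \<noteq> x \<longrightarrow> \<not> mixing_shift (hclosure {(shift ^^ j) x | j. j < n}))"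
proof -
  have P: "per x n" by (rule per_intro[OF assms])
  have h: "hclosure {(shift ^^ j) x | j. j < n} = {y. \<exists>j<n. \<forall>i. y i \<le> (shift ^^ j) x i}"
    unfolding hclosure_def by blast
  show ?thesis using sofic_part[OF P] trans_part[OF P] h mix_part[OF P] by blast
qed

end
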